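(* Let $R$ be a hyperring such that $X=\operatorname{Spec}R$ is irreducible, and let $S$, $K$, $\mathcal{F}_X$ be as in the context. Then for every $f\in S$ there is a canonical injective strict homomorphism of hyperrings $R_f\to\mathcal{F}_X(D(f))$, $\frac{a}{f^n}\mapsto\frac{a}{f^n}$; in particular (taking $f=1$) $R$ is a sub-hyperring of $\mathcal{F}_X(X)$ via $a\mapsto\frac a1$. Furthermore, if $R$ has a unique maximal hyperideal, then $R\cong\mathcal{F}_X(X)$.
   Context: Hyperring: a set with a hyperoperation $+:R\times R\to\mathcal{P}^*(R)$ (nonempty subsets; extended to subsets by $A+B=\bigcup a+b$) making $(R,+,0)$ a canonical hypergroup (commutative, associative, unique $0$ with $0+x=\{x\}$, unique $-x$ with $0\in x+(-x)$, and $x\in y+z\iff z\in x+(-y)$), and a commutative monoid $(R,\cdot,1)$, with $x(y+z)=xy+xz$, $0x=0$, $0\neq1$. Homomorphisms satisfy $\varphi(a+b)\subseteq\varphi(a)+\varphi(b)$, $\varphi(ab)=\varphi(a)\varphi(b)$; strict means equality for sums. Hyperideals: nonempty $I$ with $a-rb\subseteq I$ for $a,b\in I$, $r\in R$; prime/maximal as usual; $\operatorname{Spec}R$ has the Zariski topology, $D(f)=\{\mathfrak{p}\mid f\notin\mathfrak{p}\}$. $S$ is the set of non-zero-divisors of $R$; for a multiplicative submonoid $T$, $T^{-1}R$ is $R\times T$ modulo $(r_1,t_1)\sim(r_2,t_2)\iff xr_1t_2=xr_2t_1$ for some $x\in T$, with $\frac{r_1}{t_1}+\frac{r_2}{t_2}=\{\frac{y}{t_1t_2}\mid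 y\in r_1t_2+t_1r_2\}$ and componentwise multiplication; $K=S^{-1}R$, $R_f=\{1,f,f^2,\dots\}^{-1}R$. For open $U\subseteq X$, $\mathcal{F}_X(U)=\{u\in K\mid\forall\mathfrak{p}\in U,\ u=\frac ab\text{ with }a\in R,\ b\in S\setminus\mathfrak{p}\}$, a sub-hyperring of $K$. *)

theory Defs
  imports Main
begin

record 'a hyperring =
  carrier :: "'a set"
  hadd    :: "'a \<Rightarrow> 'a \<Rightarrow> 'a set"
  hzero   :: 'a
  hmult   :: "'a \<Rightarrow> 'a \<Rightarrow> 'a"
  hone    :: 'a

definition hsum :: "('a, 'b) hyperring_scheme \<Rightarrow> 'a set \<Rightarrow> 'a set \<Rightarrow> 'a set" where
  "hsum R A B = (\<Union>a\<in>A. \<Union>b\<in>B. hadd R a b)"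

definition hneg :: "('a, 'b) hyperring_scheme \<Rightarrow> 'a \<Rightarrow> 'a" where
  "hneg R x = (THE y. y \<in> carrier R \<and> hzero R \<in> hadd R x y)"

definition hyperring :: "('a, 'b) hyperring_scheme \<Rightarrow> bool" where
  "hyperring R \<longleftrightarrow>
     \<comment> \<open>hyperaddition takes values in nonempty subsets\<close>
     (\<forall>a\<in>carrier R. \<forall>b\<in>carrier R. hadd R a b \<subseteq> carrier R \<and> hadd R a b \<noteq> {}) \<and>
     \<comment> \<open>commutativity and associativity\<close>
     (\<forall>a\<in>carrier R. \<forall>b\<in>carrier R. hadd R a b = hadd R b a) \<and>
     (\<forall>a\<in>carrier R. \<forall>b\<in>carrier R. \<forall>c\<in>carrier R.
        hsum R (hadd R a b) {c} = hsum R {a} (hadd R b c)) \<and>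
     \<comment> \<open>unique neutral element 0\<close>
     hzero R \<in> carrier R \<and>
     (\<forall>x\<in>carrier R. hadd R (hzero R) x = {x}) \<and>
     (\<forall>e\<in>carrier R. (\<forall>x\<in>carrier R. hadd R e x = {x}) \<longrightarrow> e = hzero R) \<and>
     \<comment> \<open>unique inverses\<close>
     (\<forall>x\<in>carrier R. \<exists>!y. y \<in> carrier R \<and> hzero R \<in> hadd R x y) \<and>
     \<comment> \<open>reversibility\<close>
     (\<forall>x\<in>carrier R. \<forall>y\<in>carrier R. \<forall>z\<in>carrier R.
        x \<in> hadd R y z \<longleftrightarrow> z \<in> hadd R x (hneg R y)) \<and>
     \<comment> \<open>commutative multiplicative monoid\<close>
     (\<forall>a\<in>carrier R. \<forall>b\<in>carrier R. hmult R a b \<in> carrier R) \<and>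
     (\<forall>a\<in>carrier R. \<forall>b\<in>carrier R. \<forall>c\<in>carrier R.
        hmult R (hmult R a b) c = hmult R a (hmult R b c)) \<and>
     (\<forall>a\<in>carrier R. \<forall>b\<in>carrier R. hmult R a b = hmult R b a) \<and>
     hone R \<in> carrier R \<and>
     (\<forall>a\<in>carrier R. hmult R (hone R) a = a) \<and>
     \<comment> \<open>distributivity, absorbing zero, 0 \<noteq> 1\<close>
     (\<forall>x\<in>carrier R. \<forall>y\<in>carrier R. \<forall>z\<in>carrier R.
        hmult R x ` hadd R y z = hadd R (hmult R x y) (hmult R x z)) \<and>
     (\<forall>x\<in>carrier R. hmult R (hzero R) x = hzero R) \<and>
     hzero R \<noteq> hone R"

definition hyperring_hom ::
  "('a, 'c) hyperring_scheme \<Rightarrow> ('b, 'd) hyperring_scheme \<Rightarrow> ('a \<Rightarrow> 'b) \<Rightarrow> bool" where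
  "hyperring_hom R S \<phi> \<longleftrightarrow>
     (\<forall>a\<in>carrier R. \<phi> a \<in> carrier S) \<and>
     (\<forall>a\<in>carrier R. \<forall>b\<in>carrier R. \<phi> ` hadd R a b \<subseteq> hadd S (\<phi> a) (\<phi> b)) \<and>
     (\<forall>a\<in>carrier R. \<forall>b\<in>carrier R. \<phi> (hmult R a b) = hmult S (\<phi> a) (\<phi> b))"

definition strict_hom ::
  "('a, 'c) hyperring_scheme \<Rightarrow> ('b, 'd) hyperring_scheme \<Rightarrow> ('a \<Rightarrow> 'b) \<Rightarrow> bool" where
  "strict_hom R S \<phi> \<longleftrightarrow> hyperring_hom R S \<phi> \<and>
     (\<forall>a\<in>carrier R. \<forall>b\<in>carrier R. \<phi> ` hadd R a b = hadd S (\<phi> a) (\<phi> b))"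

definition hyperring_iso ::
  "('a, 'c) hyperring_scheme \<Rightarrow> ('b, 'd) hyperring_scheme \<Rightarrow> ('a \<Rightarrow> 'b) \<Rightarrow> bool" where
  "hyperring_iso R S \<phi> \<longleftrightarrow> strict_hom R S \<phi> \<and> bij_betw \<phi> (carrier R) (carrier S) \<and>
     strict_hom S R (inv_into (carrier R) \<phi>)"

definition hyperideal :: "('a, 'b) hyperring_scheme \<Rightarrow> 'a set \<Rightarrow> bool" where
  "hyperideal R I \<longleftrightarrow> I \<subseteq> carrier R \<and> I \<noteq> {} \<and>
     (\<forall>a\<in>I. \<forall>b\<in>I. \<forall>r\<in>carrier R. hadd R a (hneg R (hmult R r b)) \<subseteq> I)"

definition prime_hyperideal :: "('a, 'b) hyperring_scheme \<Rightarrow> 'a set \<Rightarrow> bool" where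
  "prime_hyperideal R P \<longleftrightarrow> hyperideal R P \<and> P \<noteq> carrier R \<and>
     (\<forall>a\<in>carrier R. \<forall>b\<in>carrier R. hmult R a b \<in> P \<longrightarrow> a \<in> P \<or> b \<in> P)"

definition maximal_hyperideal :: "('a, 'b) hyperring_scheme \<Rightarrow> 'a set \<Rightarrow> bool" where
  "maximal_hyperideal R M \<longleftrightarrow> hyperideal R M \<and> M \<noteq> carrier R \<and>
     (\<forall>J. hyperideal R J \<and> M \<subseteq> J \<longrightarrow> J = M \<or> J = carrier R)"

definition Spec :: "('a, 'b) hyperring_scheme \<Rightarrow> 'a set set" where
  "Spec R = {P. prime_hyperideal R P}"

definition zariski_V :: "('a, 'b) hyperring_scheme \<Rightarrow> 'a set \<Rightarrow> 'a set set" where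
  "zariski_V R E = {P \<in> Spec R. E \<subseteq> P}"

definition zariski_D :: "('a, 'b) hyperring_scheme \<Rightarrow> 'a \<Rightarrow> 'a set set" where
  "zariski_D R f = {P \<in> Spec R. f \<notin> P}"

definition irreducible_Spec :: "('a, 'b) hyperring_scheme \<Rightarrow> bool" where
  "irreducible_Spec R \<longleftrightarrow> Spec R \<noteq> {} \<and>
     (\<forall>E1 E2. E1 \<subseteq> carrier R \<and> E2 \<subseteq> carrier R \<and>
        zariski_V R E1 \<union> zariski_V R E2 = Spec R \<longrightarrow>
        zariski_V R E1 = Spec R \<or> zariski_V R E2 = Spec R)"

definition hpow :: "('a, 'b) hyperring_scheme \<Rightarrow> 'a \<Rightarrow> nat \<Rightarrow> 'a" where
  "hpow R f n = (hmult R f ^^ n) (hone R)"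

definition powers :: "('a, 'b) hyperring_scheme \<Rightarrow> 'a \<Rightarrow> 'a set" where
  "powers R f = range (hpow R f)"

definition nzd :: "('a, 'b) hyperring_scheme \<Rightarrow> 'a set" where
  "nzd R = {s \<in> carrier R. \<forall>x\<in>carrier R. hmult R s x = hzero R \<longrightarrow> x = hzero R}"

definition locrel :: "('a, 'b) hyperring_scheme \<Rightarrow> 'a set \<Rightarrow> (('a \<times> 'a) \<times> ('a \<times> 'a)) set" where
  "locrel R T = {((r1, t1), (r2, t2)). r1 \<in> carrier R \<and> r2 \<in> carrier R \<and> t1 \<in> T \<and> t2 \<in> T \<and>
      (\<exists>x\<in>T. hmult R x (hmult R r1 t2) = hmult R x (hmult R r2 t1))}"

definition frac :: "('a, 'b) hyperring_scheme \<Rightarrow> 'a set \<Rightarrow> 'a \<Rightarrow> 'a \<Rightarrow> ('a \<times> 'a) set" where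
  "frac R T r t = locrel R T `` {(r, t)}"

definition loc :: "('a, 'b) hyperring_scheme \<Rightarrow> 'a set \<Rightarrow> ('a \<times> 'a) set hyperring" where
  "loc R T = \<lparr>
     carrier = (carrier R \<times> T) // locrel R T,
     hadd = (\<lambda>A B. {frac R T y (hmult R t1 t2) | y r1 t1 r2 t2.
                      (r1, t1) \<in> A \<and> (r2, t2) \<in> B \<and>
                      y \<in> hadd R (hmult R r1 t2) (hmult R t1 r2)}),
     hzero = frac R T (hzero R) (hone R),
     hmult = (\<lambda>A B. let (r1, t1) = (SOME p. p \<in> A); (r2, t2) = (SOME p. p \<in> B)
                    in frac R T (hmult R r1 r2) (hmult R t1 t2)),
     hone = frac R T (hone R) (hone R) \<rparr>"

definition total_frac :: "('a, 'b) hyperring_scheme \<Rightarrow> ('a \<times> 'a) set hyperring" where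
  "total_frac R = loc R (nzd R)"

definition loc_at :: "('a, 'b) hyperring_scheme \<Rightarrow> 'a \<Rightarrow> ('a \<times> 'a) set hyperring" where
  "loc_at R f = loc R (powers R f)"

definition sections_set :: "('a, 'b) hyperring_scheme \<Rightarrow> 'a set set \<Rightarrow> ('a \<times> 'a) set set" where
  "sections_set R U = {u \<in> carrier (total_frac R). \<forall>P\<in>U.
      \<exists>a\<in>carrier R. \<exists>b\<in>nzd R - P. u = frac R (nzd R) a b}"

definition sections :: "('a, 'b) hyperring_scheme \<Rightarrow> 'a set set \<Rightarrow> ('a \<times> 'a) set hyperring" where
  "sections R U = (total_frac R)\<lparr>carrier := sections_set R U\<rparr>"

end

theory Submission imports Defs begin



locale hr =
  fixes R :: "('a,'b) hyperring_scheme"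
  assumes hr: "hyperring R"
begin

abbreviation mul (infixl "\<odot>" 70) where "x \<odot> y \<equiv> hmult R x y"

lemmas HH1 = hr[unfolded hyperring_def, THEN conjunct1]
lemmas HH2 = hr[unfolded hyperring_def, THEN conjunct2, THEN conjunct1]
lemmas HH3 = hr[unfolded hyperring_def, THEN conjunct2, THEN conjunct2, THEN conjunct1]
lemmas HH4 = hr[unfolded hyperring_def, THEN conjunct2, THEN conjunct2, THEN conjunct2, THEN conjunct1]
lemmas HH5 = hr[unfolded hyperring_def, THEN conjunct2, THEN conjunct2, THEN conjunct2, THEN conjunct2, THEN conjunct1]
lemmas HH6 = hr[unfolded hyperring_def, THEN conjunct2, THEN conjunct2, THEN conjunct2, THEN conjunct2, THEN conjunct2, THEN conjunct1]
lemmas HH7 = hr[unfolded hyperring_def, THEN conjunct2, THEN conjunct2, THEN conjunct2, THEN conjunct2, THEN conjunct2, THEN conjunct2, THEN conjunct1]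
lemmas HH8 = hr[unfolded hyperring_def, THEN conjunct2, THEN conjunct2, THEN conjunct2, THEN conjunct2, THEN conjunct2, THEN conjunct2, THEN conjunct2, THEN conjunct1]
lemmas HH9 = hr[unfolded hyperring_def, THEN conjunct2, THEN conjunct2, THEN conjunct2, THEN conjunct2, THEN conjunct2, THEN conjunct2, THEN conjunct2, THEN conjunct2, THEN conjunct1]
lemmas HH10 = hr[unfolded hyperring_def, THEN conjunct2, THEN conjunct2, THEN conjunct2, THEN conjunct2, THEN conjunct2, THEN conjunct2, THEN conjunct2, THEN conjunct2, THEN conjunct2, THEN conjunct1]
lemmas HH11 = hr[unfolded hyperring_def, THEN conjunct2, THEN conjunct2, THEN conjunct2, THEN conjunct2, THEN conjunct2, THEN conjunct2, THEN conjunct2, THEN conjunct2, THEN conjunct2, THEN conjunct2, THEN conjunct1]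
lemmas HH12 = hr[unfolded hyperring_def, THEN conjunct2, THEN conjunct2, THEN conjunct2, THEN conjunct2, THEN conjunct2, THEN conjunct2, THEN conjunct2, THEN conjunct2, THEN conjunct2, THEN conjunct2, THEN conjunct2, THEN conjunct1]
lemmas HH13 = hr[unfolded hyperring_def, THEN conjunct2, THEN conjunct2, THEN conjunct2, THEN conjunct2, THEN conjunct2, THEN conjunct2, THEN conjunct2, THEN conjunct2, THEN conjunct2, THEN conjunct2, THEN conjunct2, THEN conjunct2, THEN conjunct1]
lemmas HH14 = hr[unfolded hyperring_def, THEN conjunct2, THEN conjunct2, THEN conjunct2, THEN conjunct2, THEN conjunct2, THEN conjunct2, THEN conjunct2, THEN conjunct2, THEN conjunct2, THEN conjunct2, THEN conjunct2, THEN conjunct2, THEN conjunct2, THEN conjunct1]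
lemmas HH15 = hr[unfolded hyperring_def, THEN conjunct2, THEN conjunct2, THEN conjunct2, THEN conjunct2, THEN conjunct2, THEN conjunct2, THEN conjunct2, THEN conjunct2, THEN conjunct2, THEN conjunct2, THEN conjunct2, THEN conjunct2, THEN conjunct2, THEN conjunct2, THEN conjunct1]
lemmas HH16 = hr[unfolded hyperring_def, THEN conjunct2, THEN conjunct2, THEN conjunct2, THEN conjunct2, THEN conjunct2, THEN conjunct2, THEN conjunct2, THEN conjunct2, THEN conjunct2, THEN conjunct2, THEN conjunct2, THEN conjunct2, THEN conjunct2, THEN conjunct2, THEN conjunct2]

lemma add_closed: "a \<in> carrier R \<Longrightarrow> b \<in> carrier R \<Longrightarrow> hadd R a b \<subseteq> carrier R"
  using HH1 by blast
lemma add_comm: "a \<in> carrier R \<Longrightarrow> b \<in> carrier R \<Longrightarrow> hadd R a b = hadd R b a"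
  using HH2 by blast
lemma zero_closed[simp]: "hzero R \<in> carrier R"
  using HH4 by blast
lemma zero_add: "x \<in> carrier R \<Longrightarrow> hadd R (hzero R) x = {x}"
  using HH5 by blast
lemma neg_ex1: "x \<in> carrier R \<Longrightarrow> \<exists>!y. y \<in> carrier R \<and> hzero R \<in> hadd R x y"
  using HH7 by blast
lemma mult_closed[simp]: "a \<in> carrier R \<Longrightarrow> b \<in> carrier R \<Longrightarrow> a \<odot> b \<in> carrier R"
  using HH9 by blast
lemma mult_assoc: "a \<in> carrier R \<Longrightarrow> b \<in> carrier R \<Longrightarrow> c \<in> carrier R \<Longrightarrow> a \<odot> b \<odot> c = a \<odot> (b \<odot> c)"
  using HH10 by blast
lemma mult_comm: "a \<in> carrier R \<Longrightarrow> b \<in> carrier R \<Longrightarrow> a \<odot> b = b \<odot> a"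
  using HH11 by blast
lemma mult_lcomm: "a \<in> carrier R \<Longrightarrow> b \<in> carrier R \<Longrightarrow> c \<in> carrier R \<Longrightarrow> a \<odot> (b \<odot> c) = b \<odot> (a \<odot> c)"
  by (metis mult_assoc mult_comm)
lemmas ac = mult_assoc mult_comm mult_lcomm
lemma one_closed[simp]: "hone R \<in> carrier R"
  using HH12 by blast
lemma one_mult[simp]: "a \<in> carrier R \<Longrightarrow> hone R \<odot> a = a"
  using HH13 by blast
lemma mult_one[simp]: "a \<in> carrier R \<Longrightarrow> a \<odot> hone R = a"
  using one_mult mult_comm one_closed by metis
lemma distrib: "x \<in> carrier R \<Longrightarrow> y \<in> carrier R \<Longrightarrow> z \<in> carrier R \<Longrightarrow>
   hmult R x ` hadd R y z = hadd R (x \<odot> y) (x \<odot> z)"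
  using HH14 by blast
lemma zero_mult[simp]: "x \<in> carrier R \<Longrightarrow> hzero R \<odot> x = hzero R"
  using HH15 by blast
lemma mult_zero[simp]: "x \<in> carrier R \<Longrightarrow> x \<odot> hzero R = hzero R"
  using zero_mult mult_comm zero_closed by metis
lemma zero_ne_one: "hzero R \<noteq> hone R"
  using HH16 by blast

lemma neg_props: "x \<in> carrier R \<Longrightarrow> hneg R x \<in> carrier R \<and> hzero R \<in> hadd R x (hneg R x)"
  unfolding hneg_def by (rule theI'[OF neg_ex1])
lemma neg_closed[simp]: "x \<in> carrier R \<Longrightarrow> hneg R x \<in> carrier R"
  using neg_props by blast
lemma neg_zero_in: "x \<in> carrier R \<Longrightarrow> hzero R \<in> hadd R x (hneg R x)"
  using neg_props by blast
lemma neg_unique: "x \<in> carrier R \<Longrightarrow> y \<in> carrier R \<Longrightarrow> hzero R \<in> hadd R x y \<Longrightarrow> hneg R x = y"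
  using neg_ex1 neg_props by blast
lemma neg_neg[simp]: "x \<in> carrier R \<Longrightarrow> hneg R (hneg R x) = x"
  by (rule neg_unique) (auto simp: add_comm[of _ x] neg_zero_in)
lemma neg_mult: assumes "x \<in> carrier R" "y \<in> carrier R"
  shows "hneg R (x \<odot> y) = x \<odot> hneg R y"
proof (rule neg_unique)
  have "x \<odot> hzero R \<in> hmult R x ` hadd R y (hneg R y)"
    using neg_zero_in[OF assms(2)] by blast
  then show "hzero R \<in> hadd R (x \<odot> y) (x \<odot> hneg R y)"
    using assms distrib[of x y "hneg R y"] by simp
qed (use assms in auto)

lemma cancel: assumes x: "x \<in> nzd R" and c: "c \<in> carrier R" and d: "d \<in> carrier R"
  and eq: "x \<odot> c = x \<odot> d" shows "c = d"
proof -
  have xC: "x \<in> carrier R" using x unfolding nzd_def by blast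
  let ?n = "hneg R d"
  have "x \<odot> hzero R \<in> hmult R x ` hadd R d ?n"
    using neg_zero_in[OF d] by blast
  also have "hmult R x ` hadd R d ?n = hadd R (x \<odot> d) (x \<odot> ?n)"
    using distrib xC d by simp
  also have "\<dots> = hmult R x ` hadd R c ?n"
    using distrib xC c d eq by simp
  finally obtain e where e: "e \<in> hadd R c ?n" "x \<odot> e = hzero R"
    using xC by auto
  have eC: "e \<in> carrier R" using e(1) add_closed[of c "hneg R d"] c d by auto
  have "e = hzero R" using x e(2) eC unfolding nzd_def by blast
  then have "hneg R c = ?n" using e(1) c d by (intro neg_unique) auto
  then show ?thesis using c d by (metis neg_neg)
qed

lemma ideal_zero: assumes "hyperideal R I" shows "hzero R \<in> I"
proof -
  obtain b where b: "b \<in> I" using assms unfolding hyperideal_def by blast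
  have bC: "b \<in> carrier R" using b assms unfolding hyperideal_def by blast
  have "hadd R b (hneg R (hone R \<odot> b)) \<subseteq> I" using assms b unfolding hyperideal_def by simp
  then show ?thesis using neg_zero_in[OF bC] bC by auto
qed

lemma ideal_neg_mult: assumes "hyperideal R I" "b \<in> I" "r \<in> carrier R"
  shows "hneg R (r \<odot> b) \<in> I"
proof -
  have bC: "b \<in> carrier R" using assms unfolding hyperideal_def by blast
  have "hadd R (hzero R) (hneg R (r \<odot> b)) \<subseteq> I"
    using assms ideal_zero[OF assms(1)] unfolding hyperideal_def by simp
  then show ?thesis using zero_add bC assms(3) by simp
qed

lemma ideal_mult: assumes "hyperideal R I" "b \<in> I" "r \<in> carrier R"
  shows "r \<odot> b \<in> I"
proof -
  have bC: "b \<in> carrier R" using assms unfolding hyperideal_def by blast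
  have "hneg R (hone R \<odot> hneg R (r \<odot> b)) \<in> I"
    by (rule ideal_neg_mult[OF assms(1) ideal_neg_mult[OF assms]]) simp
  then show ?thesis using bC assms(3) by simp
qed

lemma ideal_one: assumes "hyperideal R I" "hone R \<in> I" shows "I = carrier R"
proof
  show "I \<subseteq> carrier R" using assms unfolding hyperideal_def by blast
  show "carrier R \<subseteq> I" using ideal_mult[OF assms] by (metis mult_one subsetI)
qed

end



locale hrT = hr +
  fixes T
  assumes T_sub: "T \<subseteq> carrier R" and one_T: "hone R \<in> T"
    and mult_T: "s \<in> T \<Longrightarrow> t \<in> T \<Longrightarrow> s \<odot> t \<in> T"
begin

lemma T_C[simp]: "t \<in> T \<Longrightarrow> t \<in> carrier R" using T_sub by blast

lemma equiv_loc: "equiv (carrier R \<times> T) (locrel R T)"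
proof (rule equivI)
  show "locrel R T \<subseteq> (carrier R \<times> T) \<times> (carrier R \<times> T)" unfolding locrel_def by auto
  show "refl_on (carrier R \<times> T) (locrel R T)" unfolding refl_on_def locrel_def using one_T by auto
  show "sym (locrel R T)" unfolding sym_def locrel_def by clarsimp metis
  show "trans (locrel R T)" unfolding trans_def
  proof (intro allI impI)
    fix p q r assume pq: "(p, q) \<in> locrel R T" and qr: "(q, r) \<in> locrel R T"
    obtain r1 t1 r2 t2 r3 t3 where eqs: "p = (r1,t1)" "q = (r2,t2)" "r = (r3,t3)"
      by (metis prod.exhaust)
    from pq obtain x where x: "x \<in> T" "x \<odot> (r1 \<odot> t2) = x \<odot> (r2 \<odot> t1)"
      and m1: "r1 \<in> carrier R" "r2 \<in> carrier R" "t1 \<in> T" "t2 \<in> T"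
      unfolding eqs locrel_def by auto
    from qr obtain y where y: "y \<in> T" "y \<odot> (r2 \<odot> t3) = y \<odot> (r3 \<odot> t2)"
      and m2: "r3 \<in> carrier R" "t3 \<in> T"
      unfolding eqs locrel_def by auto
    have "(x \<odot> y \<odot> t2) \<odot> (r1 \<odot> t3) = (y \<odot> t3) \<odot> (x \<odot> (r1 \<odot> t2))"
      using x(1) y(1) m1 m2 by (simp add: ac)
    also have "\<dots> = (y \<odot> t3) \<odot> (x \<odot> (r2 \<odot> t1))" using x(2) by simp
    also have "\<dots> = (x \<odot> t1) \<odot> (y \<odot> (r2 \<odot> t3))" using x(1) y(1) m1 m2 by (simp add: ac)
    also have "\<dots> = (x \<odot> t1) \<odot> (y \<odot> (r3 \<odot> t2))" using y(2) by simp
    also have "\<dots> = (x \<odot> y \<odot> t2) \<odot> (r3 \<odot> t1)" using x(1) y(1) m1 m2 by (simp add: ac)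
    finally show "(p, r) \<in> locrel R T"
      unfolding eqs locrel_def using x y m1 m2 mult_T by auto
  qed
qed

lemma frac_eq: "r \<in> carrier R \<Longrightarrow> t \<in> T \<Longrightarrow> r' \<in> carrier R \<Longrightarrow> t' \<in> T \<Longrightarrow>
   frac R T r t = frac R T r' t' \<longleftrightarrow> ((r,t),(r',t')) \<in> locrel R T"
  unfolding frac_def by (rule eq_equiv_class_iff[OF equiv_loc]) auto

lemma locrelI: "r \<in> carrier R \<Longrightarrow> t \<in> T \<Longrightarrow> r' \<in> carrier R \<Longrightarrow> t' \<in> T \<Longrightarrow> x \<in> T \<Longrightarrow>
   x \<odot> (r \<odot> t') = x \<odot> (r' \<odot> t) \<Longrightarrow> ((r,t),(r',t')) \<in> locrel R T"
  unfolding locrel_def by auto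

lemma frac_self: "r \<in> carrier R \<Longrightarrow> t \<in> T \<Longrightarrow> (r,t) \<in> frac R T r t"
  unfolding frac_def using equiv_loc unfolding equiv_def refl_on_def by auto

lemma frac_mem: "p \<in> frac R T r t \<Longrightarrow> ((r,t), p) \<in> locrel R T"
  unfolding frac_def by auto

lemma locrel_sym: "(p,q) \<in> locrel R T \<Longrightarrow> (q,p) \<in> locrel R T"
  using equiv_loc unfolding equiv_def sym_def by blast
lemma locrel_trans: "(p,q) \<in> locrel R T \<Longrightarrow> (q,r) \<in> locrel R T \<Longrightarrow> (p,r) \<in> locrel R T"
  using equiv_loc unfolding equiv_def trans_def by blast

lemma carrier_loc: "carrier (loc R T) = {frac R T r t | r t. r \<in> carrier R \<and> t \<in> T}"
  unfolding loc_def quotient_def frac_def by auto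

lemma frac_in: "r \<in> carrier R \<Longrightarrow> t \<in> T \<Longrightarrow> frac R T r t \<in> carrier (loc R T)"
  unfolding carrier_loc by blast

lemma mult_rep: assumes "((a,s),(a',s')) \<in> locrel R T" "((b,u),(b',u')) \<in> locrel R T"
  shows "((a \<odot> b, s \<odot> u), (a' \<odot> b', s' \<odot> u')) \<in> locrel R T"
proof -
  from assms(1) obtain x where x: "x \<in> T" "x \<odot> (a \<odot> s') = x \<odot> (a' \<odot> s)"
    and m1: "a \<in> carrier R" "a' \<in> carrier R" "s \<in> T" "s' \<in> T" unfolding locrel_def by auto
  from assms(2) obtain y where y: "y \<in> T" "y \<odot> (b \<odot> u') = y \<odot> (b' \<odot> u)"
    and m2: "b \<in> carrier R" "b' \<in> carrier R" "u \<in> T" "u' \<in> T" unfolding locrel_def by auto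
  have "(x \<odot> y) \<odot> ((a \<odot> b) \<odot> (s' \<odot> u')) = (x \<odot> (a \<odot> s')) \<odot> (y \<odot> (b \<odot> u'))"
    using x(1) y(1) m1 m2 by (simp add: ac)
  also have "\<dots> = (x \<odot> (a' \<odot> s)) \<odot> (y \<odot> (b' \<odot> u))" using x(2) y(2) by simp
  also have "\<dots> = (x \<odot> y) \<odot> ((a' \<odot> b') \<odot> (s \<odot> u))"
    using x(1) y(1) m1 m2 by (simp add: ac)
  finally show ?thesis using x y m1 m2 mult_T by (intro locrelI) auto
qed

lemma mult_loc: assumes "r1 \<in> carrier R" "t1 \<in> T" "r2 \<in> carrier R" "t2 \<in> T"
  shows "hmult (loc R T) (frac R T r1 t1) (frac R T r2 t2) = frac R T (r1 \<odot> r2) (t1 \<odot> t2)"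
proof -
  define p1 where "p1 = (SOME p. p \<in> frac R T r1 t1)"
  define p2 where "p2 = (SOME p. p \<in> frac R T r2 t2)"
  have "p1 \<in> frac R T r1 t1" unfolding p1_def using frac_self assms by (metis someI)
  then have h1: "((r1,t1), p1) \<in> locrel R T" by (rule frac_mem)
  have "p2 \<in> frac R T r2 t2" unfolding p2_def using frac_self assms by (metis someI)
  then have h2: "((r2,t2), p2) \<in> locrel R T" by (rule frac_mem)
  obtain a s where p1: "p1 = (a,s)" by (cases p1)
  obtain b u where p2: "p2 = (b,u)" by (cases p2)
  have hm: "hmult (loc R T) (frac R T r1 t1) (frac R T r2 t2) = frac R T (a \<odot> b) (s \<odot> u)"
    unfolding loc_def using p1 p2 unfolding p1_def p2_def by (simp add: Let_def)
  have rel: "((r1 \<odot> r2, t1 \<odot> t2), (a \<odot> b, s \<odot> u)) \<in> locrel R T"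
    using mult_rep h1 h2 p1 p2 by simp
  then have m: "a \<odot> b \<in> carrier R" "s \<odot> u \<in> T" unfolding locrel_def by auto
  show ?thesis unfolding hm using rel m assms mult_T by (subst frac_eq) (auto intro: locrel_sym)
qed

lemma add_rep: assumes rel: "((a,s),(a',s')) \<in> locrel R T" and b: "b \<in> carrier R" and u: "u \<in> T"
  and y: "y \<in> hadd R (a \<odot> u) (s \<odot> b)"
  shows "\<exists>y'\<in> hadd R (a' \<odot> u) (s' \<odot> b). ((y, s \<odot> u), (y', s' \<odot> u)) \<in> locrel R T"
proof -
  from rel obtain x where x: "x \<in> T" "x \<odot> (a \<odot> s') = x \<odot> (a' \<odot> s)"
    and m: "a \<in> carrier R" "a' \<in> carrier R" "s \<in> T" "s' \<in> T" unfolding locrel_def by auto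
  have yC: "y \<in> carrier R" using y add_closed[of "a \<odot> u" "s \<odot> b"] m b u by auto
  have "(x \<odot> s') \<odot> y \<in> hmult R (x \<odot> s') ` hadd R (a \<odot> u) (s \<odot> b)" using y by blast
  also have "\<dots> = hadd R ((x \<odot> s') \<odot> (a \<odot> u)) ((x \<odot> s') \<odot> (s \<odot> b))"
    using x m b u by (simp add: distrib)
  also have "(x \<odot> s') \<odot> (a \<odot> u) = u \<odot> (x \<odot> (a \<odot> s'))" using x(1) m b u by (simp add: ac)
  also have "\<dots> = u \<odot> (x \<odot> (a' \<odot> s))" using x(2) by simp
  also have "\<dots> = (x \<odot> s) \<odot> (a' \<odot> u)" using x(1) m b u by (simp add: ac)
  also have "(x \<odot> s') \<odot> (s \<odot> b) = (x \<odot> s) \<odot> (s' \<odot> b)" using x(1) m b u by (simp add: ac)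
  also have "hadd R ((x \<odot> s) \<odot> (a' \<odot> u)) ((x \<odot> s) \<odot> (s' \<odot> b)) = hmult R (x \<odot> s) ` hadd R (a' \<odot> u) (s' \<odot> b)"
    using x m b u by (simp add: distrib)
  finally obtain y' where y': "y' \<in> hadd R (a' \<odot> u) (s' \<odot> b)" "(x \<odot> s') \<odot> y = (x \<odot> s) \<odot> y'"
    by blast
  have y'C: "y' \<in> carrier R" using y' add_closed[of "a' \<odot> u" "s' \<odot> b"] m b u by auto
  have "x \<odot> (y \<odot> (s' \<odot> u)) = u \<odot> ((x \<odot> s') \<odot> y)" using x(1) m u yC by (simp add: ac)
  also have "\<dots> = u \<odot> ((x \<odot> s) \<odot> y')" using y' by simp
  also have "\<dots> = x \<odot> (y' \<odot> (s \<odot> u))" using x(1) m u y'C by (simp add: ac)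
  finally have "((y, s \<odot> u), (y', s' \<odot> u)) \<in> locrel R T"
    using x m u yC y'C mult_T by (intro locrelI) auto
  then show ?thesis using y' by blast
qed

lemma add_loc: assumes r1: "r1 \<in> carrier R" and t1: "t1 \<in> T" and r2: "r2 \<in> carrier R" and t2: "t2 \<in> T"
  shows "hadd (loc R T) (frac R T r1 t1) (frac R T r2 t2) =
    {frac R T y (t1 \<odot> t2) | y. y \<in> hadd R (r1 \<odot> t2) (t1 \<odot> r2)}"
proof
  show "{frac R T y (t1 \<odot> t2) | y. y \<in> hadd R (r1 \<odot> t2) (t1 \<odot> r2)} \<subseteq> hadd (loc R T) (frac R T r1 t1) (frac R T r2 t2)"
  proof
    fix z assume "z \<in> {frac R T y (t1 \<odot> t2) | y. y \<in> hadd R (r1 \<odot> t2) (t1 \<odot> r2)}"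
    then obtain y where "z = frac R T y (t1 \<odot> t2)" "y \<in> hadd R (r1 \<odot> t2) (t1 \<odot> r2)" by blast
    then show "z \<in> hadd (loc R T) (frac R T r1 t1) (frac R T r2 t2)"
      unfolding loc_def using frac_self[OF r1 t1] frac_self[OF r2 t2] by simp blast
  qed
  show "hadd (loc R T) (frac R T r1 t1) (frac R T r2 t2) \<subseteq> {frac R T y (t1 \<odot> t2) | y. y \<in> hadd R (r1 \<odot> t2) (t1 \<odot> r2)}"
  proof
    fix z assume "z \<in> hadd (loc R T) (frac R T r1 t1) (frac R T r2 t2)"
    then obtain y a s b u where z: "z = frac R T y (s \<odot> u)" and as: "(a,s) \<in> frac R T r1 t1"
      and bu: "(b,u) \<in> frac R T r2 t2" and y: "y \<in> hadd R (a \<odot> u) (s \<odot> b)"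
      unfolding loc_def by auto
    have rel1: "((a,s),(r1,t1)) \<in> locrel R T" using frac_mem[OF as] by (rule locrel_sym)
    have rel2: "((b,u),(r2,t2)) \<in> locrel R T" using frac_mem[OF bu] by (rule locrel_sym)
    have m: "a \<in> carrier R" "s \<in> T" "b \<in> carrier R" "u \<in> T" using rel1 rel2 unfolding locrel_def by auto
    obtain y1 where y1: "y1 \<in> hadd R (r1 \<odot> u) (t1 \<odot> b)" "((y, s \<odot> u), (y1, t1 \<odot> u)) \<in> locrel R T"
      using add_rep[OF rel1 m(3) m(4) y] by blast
    have "y1 \<in> hadd R (b \<odot> t1) (u \<odot> r1)" using y1(1) m r1 t1 by (simp add: add_comm ac)
    then obtain y2 where y2: "y2 \<in> hadd R (r2 \<odot> t1) (t2 \<odot> r1)" "((y1, u \<odot> t1), (y2, t2 \<odot> t1)) \<in> locrel R T"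
      using add_rep[OF rel2 r1 t1] by blast
    have y2': "y2 \<in> hadd R (r1 \<odot> t2) (t1 \<odot> r2)" using y2(1) r2 t2 r1 t1 by (simp add: add_comm ac)
    have "((y, s \<odot> u), (y2, t1 \<odot> t2)) \<in> locrel R T"
      using locrel_trans[OF y1(2)] y2(2) m t1 t2 by (simp add: ac)
    then have "z = frac R T y2 (t1 \<odot> t2)" unfolding z
      using frac_eq unfolding locrel_def by auto
    then show "z \<in> {frac R T y (t1 \<odot> t2) | y. y \<in> hadd R (r1 \<odot> t2) (t1 \<odot> r2)}" using y2' by blast
  qed
qed

end



context hr begin

lemma nzd_C: "t \<in> nzd R \<Longrightarrow> t \<in> carrier R" unfolding nzd_def by blast
lemma one_nzd: "hone R \<in> nzd R" unfolding nzd_def by simp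
lemma nzd_mult: assumes "s \<in> nzd R" "t \<in> nzd R" shows "s \<odot> t \<in> nzd R"
proof -
  have C: "s \<in> carrier R" "t \<in> carrier R" using assms nzd_C by auto
  show ?thesis unfolding nzd_def
  proof (intro CollectI conjI ballI impI)
    show "s \<odot> t \<in> carrier R" using C by simp
    fix x assume x: "x \<in> carrier R" "s \<odot> t \<odot> x = hzero R"
    then have "s \<odot> (t \<odot> x) = hzero R" using C by (simp add: mult_assoc)
    then have "t \<odot> x = hzero R" using assms(1) x C unfolding nzd_def by auto
    then show "x = hzero R" using assms(2) x unfolding nzd_def by auto
  qed
qed

end

sublocale hr \<subseteq> K: hrT R "nzd R"
  by unfold_locales (auto simp: nzd_C one_nzd nzd_mult)

context hr begin

lemma hpow_0[simp]: "hpow R f 0 = hone R" unfolding hpow_def by simp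
lemma hpow_Suc: "hpow R f (Suc n) = f \<odot> hpow R f n" unfolding hpow_def by simp
lemma hpow_closed[simp]: "f \<in> carrier R \<Longrightarrow> hpow R f n \<in> carrier R"
  by (induct n) (auto simp: hpow_Suc)
lemma hpow_add: "f \<in> carrier R \<Longrightarrow> hpow R f m \<odot> hpow R f n = hpow R f (m + n)"
  by (induct m) (auto simp: hpow_Suc mult_assoc)
lemma hpow_nzd: "f \<in> nzd R \<Longrightarrow> hpow R f n \<in> nzd R"
  by (induct n) (auto simp: hpow_Suc one_nzd nzd_mult)

lemma powers_T: "f \<in> carrier R \<Longrightarrow> hrT R (powers R f)"
  apply unfold_locales
  unfolding powers_def
    apply auto
   apply (metis hpow_0 rangeI)
  apply (metis hpow_add rangeI)
  done

lemma prime_pow: assumes P: "prime_hyperideal R P" and f: "f \<in> carrier R" "f \<notin> P"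
  shows "hpow R f n \<notin> P"
proof (induct n)
  case 0
  show ?case
  proof
    assume "hpow R f 0 \<in> P"
    then have "hone R \<in> P" by simp
    moreover have "hyperideal R P" "P \<noteq> carrier R" using P unfolding prime_hyperideal_def by auto
    ultimately show False using ideal_one by blast
  qed
next
  case (Suc n)
  have "\<forall>a\<in>carrier R. \<forall>b\<in>carrier R. a \<odot> b \<in> P \<longrightarrow> a \<in> P \<or> b \<in> P"
    using P unfolding prime_hyperideal_def by blast
  then show ?case using Suc f hpow_closed[OF f(1), of n] unfolding hpow_Suc by blast
qed

lemma sec_simps: "carrier (sections R U) = sections_set R U"
  "hadd (sections R U) = hadd (loc R (nzd R))" "hmult (sections R U) = hmult (loc R (nzd R))"
  by (simp_all add: sections_def total_frac_def)

lemma in_sections: assumes "a \<in> carrier R" "t \<in> nzd R" "\<forall>P\<in>U. t \<notin> P"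
  shows "frac R (nzd R) a t \<in> sections_set R U"
  unfolding sections_set_def total_frac_def using K.frac_in assms by blast

lemma part1: assumes f: "f \<in> nzd R"
  shows "\<exists>\<phi>. strict_hom (loc_at R f) (sections R (zariski_D R f)) \<phi> \<and>
            inj_on \<phi> (carrier (loc_at R f)) \<and>
            (\<forall>a\<in>carrier R. \<forall>n. \<phi> (frac R (powers R f) a (hpow R f n)) = frac R (nzd R) a (hpow R f n))"
proof -
  have fC: "f \<in> carrier R" using f nzd_C by blast
  interpret P: hrT R "powers R f" by (rule powers_T[OF fC])
  have pn: "powers R f \<subseteq> nzd R" unfolding powers_def using hpow_nzd f by auto
  have sub: "locrel R (powers R f) \<subseteq> locrel R (nzd R)" unfolding locrel_def using pn by blast
  define \<phi> where "\<phi> A = locrel R (nzd R) `` A" for A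
  have key: "\<phi> (frac R (powers R f) a t) = frac R (nzd R) a t" if "a \<in> carrier R" "t \<in> powers R f" for a t
  proof
    show "\<phi> (frac R (powers R f) a t) \<subseteq> frac R (nzd R) a t"
      unfolding \<phi>_def frac_def using sub K.locrel_trans by blast
    show "frac R (nzd R) a t \<subseteq> \<phi> (frac R (powers R f) a t)"
      unfolding \<phi>_def using P.frac_self[OF that] unfolding frac_def by blast
  qed
  have carr: "carrier (loc_at R f) = {frac R (powers R f) r t | r t. r \<in> carrier R \<and> t \<in> powers R f}"
    unfolding loc_at_def by (rule P.carrier_loc)
  have insec: "frac R (nzd R) a t \<in> sections_set R (zariski_D R f)" if a: "a \<in> carrier R" and t: "t \<in> powers R f" for a t
  proof (rule in_sections[OF a])
    show "t \<in> nzd R" using t pn by blast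
    obtain n where "t = hpow R f n" using t unfolding powers_def by blast
    then show "\<forall>P\<in>zariski_D R f. t \<notin> P"
      using prime_pow fC unfolding zariski_D_def Spec_def by blast
  qed
  have clos: "\<forall>A\<in>carrier (loc_at R f). \<phi> A \<in> carrier (sections R (zariski_D R f))"
    unfolding carr sec_simps using key insec by auto
  have addq: "\<phi> ` hadd (loc_at R f) A B = hadd (sections R (zariski_D R f)) (\<phi> A) (\<phi> B)"
    if hA: "A \<in> carrier (loc_at R f)" and hB: "B \<in> carrier (loc_at R f)" for A B
  proof -
    obtain a s where A: "A = frac R (powers R f) a s" "a \<in> carrier R" "s \<in> powers R f"
      using hA unfolding carr by blast
    obtain b t where B: "B = frac R (powers R f) b t" "b \<in> carrier R" "t \<in> powers R f"
      using hB unfolding carr by blast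
    have sn: "s \<in> nzd R" "t \<in> nzd R" using A B pn by auto
    have yC: "y \<in> carrier R" if "y \<in> hadd R (a \<odot> t) (s \<odot> b)" for y
      using that add_closed[of "a \<odot> t" "s \<odot> b"] A B by auto
    have "\<phi> ` hadd (loc_at R f) A B = \<phi> ` {frac R (powers R f) y (s \<odot> t) | y. y \<in> hadd R (a \<odot> t) (s \<odot> b)}"
      unfolding A B loc_at_def using P.add_loc A B by simp
    also have "\<dots> = {frac R (nzd R) y (s \<odot> t) | y. y \<in> hadd R (a \<odot> t) (s \<odot> b)}"
      using key yC P.mult_T A B by blast
    also have "\<dots> = hadd (sections R (zariski_D R f)) (\<phi> A) (\<phi> B)"
      unfolding sec_simps A B using key A B K.add_loc sn by simp
    finally show ?thesis .
  qed
  have multq: "\<phi> (hmult (loc_at R f) A B) = hmult (sections R (zariski_D R f)) (\<phi> A) (\<phi> B)"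
    if hA: "A \<in> carrier (loc_at R f)" and hB: "B \<in> carrier (loc_at R f)" for A B
  proof -
    obtain a s where A: "A = frac R (powers R f) a s" "a \<in> carrier R" "s \<in> powers R f"
      using hA unfolding carr by blast
    obtain b t where B: "B = frac R (powers R f) b t" "b \<in> carrier R" "t \<in> powers R f"
      using hB unfolding carr by blast
    have sn: "s \<in> nzd R" "t \<in> nzd R" using A B pn by auto
    show ?thesis unfolding sec_simps A B loc_at_def
      using P.mult_loc A B key K.mult_loc sn P.mult_T by simp
  qed
  have inj: "inj_on \<phi> (carrier (loc_at R f))"
  proof (rule inj_onI)
    fix A B assume hA: "A \<in> carrier (loc_at R f)" and hB: "B \<in> carrier (loc_at R f)" and eq: "\<phi> A = \<phi> B"
    obtain a s where A: "A = frac R (powers R f) a s" "a \<in> carrier R" "s \<in> powers R f"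
      using hA unfolding carr by blast
    obtain b t where B: "B = frac R (powers R f) b t" "b \<in> carrier R" "t \<in> powers R f"
      using hB unfolding carr by blast
    have sn: "s \<in> nzd R" "t \<in> nzd R" using A B pn by auto
    have "frac R (nzd R) a s = frac R (nzd R) b t" using eq key A B by simp
    then obtain x where x: "x \<in> nzd R" "x \<odot> (a \<odot> t) = x \<odot> (b \<odot> s)"
      using K.frac_eq A B sn unfolding locrel_def by auto
    have "a \<odot> t = b \<odot> s" by (rule cancel[OF x(1) _ _ x(2)]) (use A B sn nzd_C in auto)
    then have "((a,s),(b,t)) \<in> locrel R (powers R f)"
      using A B P.one_T by (intro P.locrelI) auto
    then show "A = B" using A B P.frac_eq by simp
  qed
  show ?thesis
    apply (rule exI[of _ \<phi>])
    unfolding strict_hom_def hyperring_hom_def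
    using clos addq multq inj key P.one_T
    by (auto simp: powers_def)
qed

lemma part2: "\<exists>\<phi>. strict_hom R (sections R (Spec R)) \<phi> \<and> inj_on \<phi> (carrier R) \<and>
            (\<forall>a\<in>carrier R. \<phi> a = frac R (nzd R) a (hone R))"
proof -
  define \<phi> where "\<phi> a = frac R (nzd R) a (hone R)" for a
  have one_notin: "hone R \<notin> P" if "P \<in> Spec R" for P
    using that ideal_one unfolding Spec_def prime_hyperideal_def by auto
  have clos: "\<forall>a\<in>carrier R. \<phi> a \<in> carrier (sections R (Spec R))"
    unfolding sec_simps \<phi>_def using in_sections one_nzd one_notin by blast
  have addq: "\<phi> ` hadd R a b = hadd (sections R (Spec R)) (\<phi> a) (\<phi> b)"
    if "a \<in> carrier R" "b \<in> carrier R" for a b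
    unfolding sec_simps \<phi>_def using K.add_loc[OF that(1) one_nzd that(2) one_nzd] that by auto
  have multq: "\<phi> (a \<odot> b) = hmult (sections R (Spec R)) (\<phi> a) (\<phi> b)"
    if "a \<in> carrier R" "b \<in> carrier R" for a b
    unfolding sec_simps \<phi>_def using K.mult_loc[OF that(1) one_nzd that(2) one_nzd] that by auto
  have inj: "inj_on \<phi> (carrier R)"
  proof (rule inj_onI)
    fix a b assume ab: "a \<in> carrier R" "b \<in> carrier R" and "\<phi> a = \<phi> b"
    then obtain x where x: "x \<in> nzd R" "x \<odot> (a \<odot> hone R) = x \<odot> (b \<odot> hone R)"
      using K.frac_eq one_nzd unfolding \<phi>_def locrel_def by auto
    show "a = b" by (rule cancel[OF x(1) ab]) (use x ab in simp)
  qed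
  show ?thesis
    apply (rule exI[of _ \<phi>])
    unfolding strict_hom_def hyperring_hom_def
    using clos addq multq inj by (auto simp: \<phi>_def)
qed

end



lemma inv_strict:
  assumes h: "strict_hom R S \<phi>" and b: "bij_betw \<phi> (carrier R) (carrier S)"
    and cl: "\<forall>a\<in>carrier R. \<forall>b\<in>carrier R. hadd R a b \<subseteq> carrier R"
    and ml: "\<forall>a\<in>carrier R. \<forall>b\<in>carrier R. hmult R a b \<in> carrier R"
  shows "strict_hom S R (inv_into (carrier R) \<phi>)"
proof -
  let ?\<psi> = "inv_into (carrier R) \<phi>"
  have inj: "inj_on \<phi> (carrier R)" and im: "\<phi> ` carrier R = carrier S"
    using b unfolding bij_betw_def by auto
  have hs: "\<forall>a\<in>carrier R. \<forall>b\<in>carrier R. \<phi> ` hadd R a b = hadd S (\<phi> a) (\<phi> b)"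
    and hm: "\<forall>a\<in>carrier R. \<forall>b\<in>carrier R. \<phi> (hmult R a b) = hmult S (\<phi> a) (\<phi> b)"
    using h unfolding strict_hom_def hyperring_hom_def by auto
  have c1: "\<forall>u\<in>carrier S. ?\<psi> u \<in> carrier R"
  proof
    fix u assume "u \<in> carrier S"
    then have "u \<in> \<phi> ` carrier R" using im by simp
    then show "?\<psi> u \<in> carrier R" by (rule inv_into_into)
  qed
  have c2: "?\<psi> ` hadd S u v = hadd R (?\<psi> u) (?\<psi> v)" if hu: "u \<in> carrier S" and hv: "v \<in> carrier S" for u v
  proof -
    obtain a where a: "a \<in> carrier R" "u = \<phi> a" using hu im by blast
    obtain c where c: "c \<in> carrier R" "v = \<phi> c" using hv im by blast
    have "?\<psi> ` hadd S u v = ?\<psi> ` \<phi> ` hadd R a c" using hs a c by simp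
    also have "\<dots> = hadd R a c" using inj cl a c by (simp add: inv_into_image_cancel)
    finally show ?thesis using a c inj by simp
  qed
  have c3: "?\<psi> (hmult S u v) = hmult R (?\<psi> u) (?\<psi> v)" if hu: "u \<in> carrier S" and hv: "v \<in> carrier S" for u v
  proof -
    obtain a where a: "a \<in> carrier R" "u = \<phi> a" using hu im by blast
    obtain c where c: "c \<in> carrier R" "v = \<phi> c" using hv im by blast
    show ?thesis using a c inj hm ml by (metis inv_into_f_f)
  qed
  show ?thesis unfolding strict_hom_def hyperring_hom_def using c1 c2 c3 by auto
qed

context hr begin

definition unit where "unit b \<longleftrightarrow> (\<exists>c\<in>carrier R. b \<odot> c = hone R)"

lemma principal_ideal: assumes b: "b \<in> carrier R"
  shows "hyperideal R {b \<odot> r | r. r \<in> carrier R}"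
  unfolding hyperideal_def
proof (intro conjI ballI)
  show "{b \<odot> r | r. r \<in> carrier R} \<subseteq> carrier R" using b by auto
  show "{b \<odot> r | r. r \<in> carrier R} \<noteq> {}" using one_closed by blast
  fix x y s assume x: "x \<in> {b \<odot> r | r. r \<in> carrier R}" and y: "y \<in> {b \<odot> r | r. r \<in> carrier R}"
    and s: "s \<in> carrier R"
  obtain r1 where r1: "r1 \<in> carrier R" "x = b \<odot> r1" using x by blast
  obtain r2 where r2: "r2 \<in> carrier R" "y = b \<odot> r2" using y by blast
  have "hneg R (s \<odot> y) = b \<odot> hneg R (s \<odot> r2)"
    using r2 s b by (simp add: mult_lcomm neg_mult)
  then have "hadd R x (hneg R (s \<odot> y)) = hmult R b ` hadd R r1 (hneg R (s \<odot> r2))"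
    using r1 r2 s b by (simp add: distrib)
  also have "\<dots> \<subseteq> {b \<odot> r | r. r \<in> carrier R}"
    using add_closed[of r1 "hneg R (s \<odot> r2)"] r1 r2 s by auto
  finally show "hadd R x (hneg R (s \<odot> y)) \<subseteq> {b \<odot> r | r. r \<in> carrier R}" .
qed

lemma nonunit_in_max: assumes b: "b \<in> carrier R" "\<not> unit b"
  shows "\<exists>M. maximal_hyperideal R M \<and> b \<in> M"
proof -
  define \<A> where "\<A> = {I. hyperideal R I \<and> hone R \<notin> I \<and> b \<in> I}"
  have "{b \<odot> r | r. r \<in> carrier R} \<in> \<A>"
    unfolding \<A>_def using principal_ideal[OF b(1)] b unfolding unit_def
    by (auto intro!: exI[of _ "hone R"])
  then have ne: "\<A> \<noteq> {}" by blast
  have ch: "\<Union>\<C> \<in> \<A>" if "\<C> \<noteq> {}" "subset.chain \<A> \<C>" for \<C>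
  proof -
    have sub: "\<C> \<subseteq> \<A>" and lin: "\<forall>X\<in>\<C>. \<forall>Y\<in>\<C>. X \<subseteq> Y \<or> Y \<subseteq> X"
      using that(2) unfolding subset_chain_def by auto
    have "hyperideal R (\<Union>\<C>)" unfolding hyperideal_def
    proof (intro conjI ballI)
      show "\<Union>\<C> \<subseteq> carrier R" using sub unfolding \<A>_def hyperideal_def by blast
      show "\<Union>\<C> \<noteq> {}" using sub that(1) unfolding \<A>_def by blast
      fix x y r assume "x \<in> \<Union>\<C>" "y \<in> \<Union>\<C>" "r \<in> carrier R"
      then obtain X Y where XY: "X \<in> \<C>" "Y \<in> \<C>" "x \<in> X" "y \<in> Y" by blast
      then obtain Z where Z: "Z \<in> \<C>" "x \<in> Z" "y \<in> Z" using lin by blast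
      then have "hadd R x (hneg R (r \<odot> y)) \<subseteq> Z"
        using sub \<open>r \<in> carrier R\<close> unfolding \<A>_def hyperideal_def by blast
      then show "hadd R x (hneg R (r \<odot> y)) \<subseteq> \<Union>\<C>" using Z by blast
    qed
    then show ?thesis using sub that(1) unfolding \<A>_def by blast
  qed
  obtain M where M: "M \<in> \<A>" "\<forall>X\<in>\<A>. M \<subseteq> X \<longrightarrow> X = M"
    using subset_Zorn_nonempty[OF ne ch] by blast
  have "maximal_hyperideal R M" unfolding maximal_hyperideal_def
  proof (intro conjI allI impI)
    show "hyperideal R M" using M unfolding \<A>_def by blast
    show "M \<noteq> carrier R" using M one_closed unfolding \<A>_def by blast
    fix J assume J: "hyperideal R J \<and> M \<subseteq> J"
    show "J = M \<or> J = carrier R"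
    proof (cases "hone R \<in> J")
      case True then show ?thesis using ideal_one J by blast
    next
      case False then have "J \<in> \<A>" using J M unfolding \<A>_def by blast
      then show ?thesis using M J by blast
    qed
  qed
  then show ?thesis using M unfolding \<A>_def by blast
qed

lemma max_no_unit: assumes M: "maximal_hyperideal R M" and u: "u \<in> M" "unit u"
  shows False
proof -
  have I: "hyperideal R M" "M \<noteq> carrier R" using M unfolding maximal_hyperideal_def by auto
  obtain c where c: "c \<in> carrier R" "u \<odot> c = hone R" using u unfolding unit_def by blast
  have "c \<odot> u \<in> M" using ideal_mult[OF I(1) u(1) c(1)] .
  then have "hone R \<in> M" using c u I unfolding hyperideal_def by (metis mult_comm subsetD)
  then show False using ideal_one I by blast
qed

lemma part3: assumes "\<exists>!M. maximal_hyperideal R M"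
  shows "\<exists>\<phi>. hyperring_iso R (sections R (Spec R)) \<phi>"
proof -
  obtain m where m: "maximal_hyperideal R m" and mu: "\<And>M. maximal_hyperideal R M \<Longrightarrow> M = m"
    using assms by blast
  have mI: "hyperideal R m" "m \<noteq> carrier R" using m unfolding maximal_hyperideal_def by auto
  have nonunit: "b \<in> m" if "b \<in> carrier R" "\<not> unit b" for b
    using nonunit_in_max[OF that] mu by blast
  have munit: "\<not> unit b" if "b \<in> m" for b using max_no_unit[OF m that] by blast
  have mprime: "prime_hyperideal R m" unfolding prime_hyperideal_def
  proof (intro conjI ballI impI)
    fix a b assume ab: "a \<in> carrier R" "b \<in> carrier R" "a \<odot> b \<in> m"
    show "a \<in> m \<or> b \<in> m"
    proof (rule ccontr)
      assume "\<not> (a \<in> m \<or> b \<in> m)"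
      then have "unit a" "unit b" using nonunit ab by auto
      then obtain c d where cd: "c \<in> carrier R" "a \<odot> c = hone R" "d \<in> carrier R" "b \<odot> d = hone R"
        unfolding unit_def by blast
      have "(a \<odot> b) \<odot> (c \<odot> d) = (a \<odot> c) \<odot> (b \<odot> d)" using ab cd by (simp add: ac)
      then have "unit (a \<odot> b)" unfolding unit_def using cd by auto
      then show False using munit ab by blast
    qed
  qed (use mI in auto)
  obtain \<phi> where h: "strict_hom R (sections R (Spec R)) \<phi>" "inj_on \<phi> (carrier R)"
    "\<forall>a\<in>carrier R. \<phi> a = frac R (nzd R) a (hone R)"
    using part2 by blast
  have "\<phi> ` carrier R \<subseteq> carrier (sections R (Spec R))"
    using h(1) unfolding strict_hom_def hyperring_hom_def by blast
  moreover have "carrier (sections R (Spec R)) \<subseteq> \<phi> ` carrier R"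
  proof
    fix u assume "u \<in> carrier (sections R (Spec R))"
    then have "u \<in> sections_set R (Spec R)" by (simp add: sec_simps)
    moreover have "m \<in> Spec R" using mprime unfolding Spec_def by blast
    ultimately obtain a b where ab: "a \<in> carrier R" "b \<in> nzd R" "b \<notin> m" "u = frac R (nzd R) a b"
      unfolding sections_set_def by blast
    have bC: "b \<in> carrier R" using ab nzd_C by blast
    then have "unit b" using nonunit ab by blast
    then obtain c where c: "c \<in> carrier R" "b \<odot> c = hone R" unfolding unit_def by blast
    have "hone R \<odot> (a \<odot> hone R) = hone R \<odot> ((a \<odot> c) \<odot> b)"
    proof -
      have "(a \<odot> c) \<odot> b = a \<odot> (b \<odot> c)" using ab(1) c bC by (simp add: ac)
      then show ?thesis using c ab(1) by simp
    qed
    then have "((a,b),(a \<odot> c, hone R)) \<in> locrel R (nzd R)"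
      using ab c bC one_nzd by (intro K.locrelI) auto
    then have "u = frac R (nzd R) (a \<odot> c) (hone R)"
      using ab c one_nzd K.frac_eq by simp
    then show "u \<in> \<phi> ` carrier R" using h(3) ab c by auto
  qed
  ultimately have bij: "bij_betw \<phi> (carrier R) (carrier (sections R (Spec R)))"
    using h(2) unfolding bij_betw_def by blast
  have "strict_hom (sections R (Spec R)) R (inv_into (carrier R) \<phi>)"
    by (rule inv_strict[OF h(1) bij]) (auto simp: add_closed)
  then show ?thesis unfolding hyperring_iso_def using h(1) bij by blast
qed

end

theorem proposition4p29:
  fixes R :: "'a hyperring"
  assumes "hyperring R"
    and "irreducible_Spec R"
  shows "(\<forall>f\<in>nzd R. \<exists>\<phi>.
            strict_hom (loc_at R f) (sections R (zariski_D R f)) \<phi> \<and>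
            inj_on \<phi> (carrier (loc_at R f)) \<and>
            (\<forall>a\<in>carrier R. \<forall>n. \<phi> (frac R (powers R f) a (hpow R f n)) = frac R (nzd R) a (hpow R f n)))
       \<and> (\<exists>\<phi>. strict_hom R (sections R (Spec R)) \<phi> \<and> inj_on \<phi> (carrier R) \<and>
            (\<forall>a\<in>carrier R. \<phi> a = frac R (nzd R) a (hone R)))
       \<and> ((\<exists>!M. maximal_hyperideal R M) \<longrightarrow> (\<exists>\<phi>. hyperring_iso R (sections R (Spec R)) \<phi>))"
proof -
  interpret hr R by (rule hr.intro) (rule assms(1))
  show ?thesis
    apply (intro conjI impI ballI)
      apply (erule part1)
     apply (rule part2)
    apply (erule part3)
    done
qed


end
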